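(* Let $G=(V,E)$ be a graph and $v\in V$. Suppose that $G$ is $\mathcal{R}_d$-closed, $\deg_G(v)=k\geq d+1$, and $G$ contains no $K_{d+2}$ as a subgraph. Then $$\mathrm{rc}^*_d(G,v)\geq d+1-\frac{1}{k+1}\binom{d+2}{2}.$$
   Context: $r_d$ is the rank function of the $d$-dimensional generic rigidity matroid $\mathcal{R}_d$ (linear independence of rows of the rigidity matrix of a generic $d$-dimensional framework); $r_d(H)$ is the rank of $E(H)$. $G$ is $\mathcal{R}_d$-closed if $r_d(G+uv)=r_d(G)+1$ for every non-adjacent pair $u,v$. Let $\pi$ be a uniformly random ordering of $V$, $T_v^\pi$ the set of vertices preceding $v$ in $\pi$, $E_v$ the set of edges incident with $v$, and $E_v^\pi=\{vu\in E_v:u\in T_v^\pi\}$. Define $\mathrm{rc}^*_d(G,v,\pi)=r_d(G-E_v+E_v^\pi)-r_d(G-v)$ and $\mathrm{rc}^*_d(G,v)=\mathbb{E}(\mathrm{rc}^*_d(G,v,\pi))$. *)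

theory Defs
  imports Complex_Main "HOL-Combinatorics.Multiset_Permutations"
begin

definition graph :: "'a set \<Rightarrow> 'a set set \<Rightarrow> bool" where
  "graph V E \<longleftrightarrow> finite V \<and> (\<forall>e\<in>E. \<exists>u v. e = {u, v} \<and> u \<noteq> v \<and> u \<in> V \<and> v \<in> V)"

text \<open>Row of the d-dimensional rigidity matrix of framework p for edge e = {u,v}:
  entry at (w,i) is p w i - p x i where x is the other endpoint, for w in e and i < d.\<close>

definition rig_row :: "nat \<Rightarrow> ('a \<Rightarrow> nat \<Rightarrow> real) \<Rightarrow> 'a set \<Rightarrow> ('a \<times> nat \<Rightarrow> real)" where
  "rig_row d p e = (\<lambda>(w, i). if w \<in> e \<and> i < d then (\<Sum>x\<in>e. p w i - p x i) else 0)"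

definition rows_indep :: "nat \<Rightarrow> ('a \<Rightarrow> nat \<Rightarrow> real) \<Rightarrow> 'a set set \<Rightarrow> bool" where
  "rows_indep d p S \<longleftrightarrow>
     (\<forall>c. (\<lambda>z. \<Sum>e\<in>S. c e * rig_row d p e z) = (\<lambda>z. 0) \<longrightarrow> (\<forall>e\<in>S. c e = 0))"

definition rig_rank :: "nat \<Rightarrow> ('a \<Rightarrow> nat \<Rightarrow> real) \<Rightarrow> 'a set set \<Rightarrow> nat" where
  "rig_rank d p F = Max {card S | S. S \<subseteq> F \<and> rows_indep d p S}"

text \<open>Generic rigidity matroid rank r_d(F): rank of the rigidity matrix at a generic
  realization, which equals the maximum rank over all realizations p.\<close>

definition r_d :: "nat \<Rightarrow> 'a set set \<Rightarrow> nat" where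
  "r_d d F = Max {rig_rank d p F | p. True}"

definition R_closed :: "nat \<Rightarrow> 'a set \<Rightarrow> 'a set set \<Rightarrow> bool" where
  "R_closed d V E \<longleftrightarrow>
     (\<forall>u\<in>V. \<forall>v\<in>V. u \<noteq> v \<and> {u, v} \<notin> E \<longrightarrow> r_d d (insert {u, v} E) = r_d d E + 1)"

definition degree :: "'a set set \<Rightarrow> 'a \<Rightarrow> nat" where
  "degree E v = card {u. {u, v} \<in> E}"

definition contains_clique :: "'a set \<Rightarrow> 'a set set \<Rightarrow> nat \<Rightarrow> bool" where
  "contains_clique V E n \<longleftrightarrow>
     (\<exists>S\<subseteq>V. card S = n \<and> (\<forall>u\<in>S. \<forall>w\<in>S. u \<noteq> w \<longrightarrow> {u, w} \<in> E))"

definition precedes :: "'a list \<Rightarrow> 'a \<Rightarrow> 'a \<Rightarrow> bool" where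
  "precedes \<pi> u v \<longleftrightarrow> (\<exists>i j. i < j \<and> j < length \<pi> \<and> \<pi> ! i = u \<and> \<pi> ! j = v)"

definition edges_at :: "'a set set \<Rightarrow> 'a \<Rightarrow> 'a set set" where
  "edges_at E v = {e \<in> E. v \<in> e}"

definition edges_at_before :: "'a set set \<Rightarrow> 'a \<Rightarrow> 'a list \<Rightarrow> 'a set set" where
  "edges_at_before E v \<pi> = {e \<in> E. \<exists>u. e = {v, u} \<and> precedes \<pi> u v}"

definition rc_star_pi :: "nat \<Rightarrow> 'a set set \<Rightarrow> 'a \<Rightarrow> 'a list \<Rightarrow> int" where
  "rc_star_pi d E v \<pi> =
     int (r_d d ((E - edges_at E v) \<union> edges_at_before E v \<pi>)) - int (r_d d (E - edges_at E v))"

definition rc_star :: "nat \<Rightarrow> 'a set \<Rightarrow> 'a set set \<Rightarrow> 'a \<Rightarrow> real" where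
  "rc_star d V E v =
     (\<Sum>\<pi>\<in>permutations_of_set V. real_of_int (rc_star_pi d E v \<pi>)) / real (card (permutations_of_set V))"

end

theory Submission
  imports Defs "Jordan_Normal_Form.Determinant"
begin

hide_const (open) Polynomial.degree


definition indepF :: "('i \<Rightarrow> 'z \<Rightarrow> real) \<Rightarrow> 'i set \<Rightarrow> bool" where
  "indepF f S \<longleftrightarrow> (\<forall>c. (\<lambda>z. \<Sum>e\<in>S. c e * f e z) = (\<lambda>z. 0) \<longrightarrow> (\<forall>e\<in>S. c e = 0))"

lemma indepF_cong:
  assumes "\<And>e. e \<in> S \<Longrightarrow> f e = g e"
  shows "indepF f S = indepF g S"
proof -
  have "(\<lambda>z. \<Sum>e\<in>S. c e * f e z) = (\<lambda>z. \<Sum>e\<in>S. c e * g e z)" for c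
    using assms by (intro ext sum.cong) auto
  then show ?thesis unfolding indepF_def by simp
qed

lemma sum_set_nth:
  assumes "distinct es"
  shows "sum f (set es) = (\<Sum>i=0..<length es. f (es!i))"
proof -
  have "set es = (!) es ` {0..<length es}" by (auto simp: set_conv_nth)
  moreover have "inj_on ((!) es) {0..<length es}" using assms by (simp add: inj_on_nth)
  ultimately show ?thesis by (simp add: sum.reindex)
qed

lemma gram_indep:
  fixes v :: "'i \<Rightarrow> 'z \<Rightarrow> real"
  assumes es: "distinct es" "set es = S" and Z: "finite Zs" and v0: "\<And>e z. z \<notin> Zs \<Longrightarrow> v e z = 0"
  shows "indepF v S \<longleftrightarrow> det (mat (length es) (length es) (\<lambda>(i,j). \<Sum>z\<in>Zs. v (es!i) z * v (es!j) z)) \<noteq> 0"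
    (is "_ \<longleftrightarrow> det ?M \<noteq> 0")
proof -
  define n where "n = length es"
  have M: "?M \<in> carrier_mat n n" by (simp add: n_def)
  have sumS: "\<And>f. sum f S = (\<Sum>i=0..<n. f (es!i))" using sum_set_nth[OF es(1)] es(2) n_def by metis
  show ?thesis
  proof
    assume ind: "indepF v S"
    show "det ?M \<noteq> 0"
    proof
      assume "det ?M = 0"
      then obtain c where c: "c \<in> carrier_vec n" "c \<noteq> 0\<^sub>v n" "?M *\<^sub>v c = 0\<^sub>v n"
        using det_0_iff_vec_prod_zero[OF M] by auto
      define w where "w z = (\<Sum>j=0..<n. c $ j * v (es!j) z)" for z
      have Mc: "(\<Sum>j=0..<n. (\<Sum>z\<in>Zs. v (es!i) z * v (es!j) z) * c $ j) = 0" if "i < n" for i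
      proof -
        have "(?M *\<^sub>v c) $ i = 0" using c(3) that by (simp add: n_def)
        then show ?thesis using that c(1) by (simp add: n_def scalar_prod_def)
      qed
      have "(\<Sum>i=0..<n. c $ i * (\<Sum>j=0..<n. (\<Sum>z\<in>Zs. v (es!i) z * v (es!j) z) * c $ j))
          = (\<Sum>i=0..<n. \<Sum>j=0..<n. \<Sum>z\<in>Zs. (c $ i * v (es!i) z) * (c $ j * v (es!j) z))"
        by (simp add: sum_distrib_left sum_distrib_right mult_ac)
      also have "\<dots> = (\<Sum>i=0..<n. \<Sum>z\<in>Zs. \<Sum>j=0..<n. (c $ i * v (es!i) z) * (c $ j * v (es!j) z))"
        by (rule sum.cong[OF refl], rule sum.swap)
      also have "\<dots> = (\<Sum>z\<in>Zs. \<Sum>i=0..<n. \<Sum>j=0..<n. (c $ i * v (es!i) z) * (c $ j * v (es!j) z))"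
        by (rule sum.swap)
      also have "\<dots> = (\<Sum>z\<in>Zs. w z * w z)"
        unfolding w_def by (simp add: sum_product)
      finally have "(\<Sum>z\<in>Zs. w z * w z) = (\<Sum>i=0..<n. c $ i * (\<Sum>j=0..<n. (\<Sum>z\<in>Zs. v (es!i) z * v (es!j) z) * c $ j))" by simp
      also have "\<dots> = 0" using Mc by simp
      finally have "(\<Sum>z\<in>Zs. w z * w z) = 0" .
      then have wz: "\<forall>z\<in>Zs. w z * w z = 0"
        using sum_nonneg_eq_0_iff[OF Z, of "\<lambda>z. w z * w z"] by simp
      define \<gamma> where "\<gamma> e = c $ (inv_into {0..<n} ((!) es) e)" for e
      have inj: "inj_on ((!) es) {0..<n}" using es(1) by (simp add: inj_on_nth n_def)
      have \<gamma>i: "\<gamma> (es!i) = c $ i" if "i < n" for i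
        using inv_into_f_f[OF inj] that by (simp add: \<gamma>_def)
      have "(\<lambda>z. \<Sum>e\<in>S. \<gamma> e * v e z) = (\<lambda>z. 0)"
      proof
        fix z
        have "(\<Sum>e\<in>S. \<gamma> e * v e z) = w z" unfolding sumS w_def
          by (rule sum.cong) (auto simp: \<gamma>i)
        also have "\<dots> = 0" using wz v0[of z] by (cases "z \<in> Zs") (auto simp: w_def)
        finally show "(\<Sum>e\<in>S. \<gamma> e * v e z) = 0" .
      qed
      then have "\<forall>e\<in>S. \<gamma> e = 0" using ind unfolding indepF_def by blast
      then have "\<forall>i<n. c $ i = 0" using \<gamma>i es(2) n_def by (auto simp flip: \<gamma>i)
      then have "c = 0\<^sub>v n" using c(1) by (intro eq_vecI) auto
      with c(2) show False by simp
    qed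
  next
    assume d: "det ?M \<noteq> 0"
    show "indepF v S" unfolding indepF_def
    proof (intro allI impI)
      fix \<gamma> assume h: "(\<lambda>z. \<Sum>e\<in>S. \<gamma> e * v e z) = (\<lambda>z. 0)"
      define c where "c = vec n (\<lambda>i. \<gamma> (es!i))"
      have hz: "(\<Sum>j=0..<n. \<gamma> (es!j) * v (es!j) z) = 0" for z
        using fun_cong[OF h, of z] sumS[of "\<lambda>e. \<gamma> e * v e z"] by simp
      have "?M *\<^sub>v c = 0\<^sub>v n"
      proof (rule eq_vecI)
        fix i assume "i < dim_vec (0\<^sub>v n :: real vec)"
        then have i: "i < n" by simp
        have "(?M *\<^sub>v c) $ i = (\<Sum>j=0..<n. (\<Sum>z\<in>Zs. v (es!i) z * v (es!j) z) * \<gamma> (es!j))"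
          using i by (simp add: n_def scalar_prod_def c_def)
        also have "\<dots> = (\<Sum>z\<in>Zs. v (es!i) z * (\<Sum>j=0..<n. \<gamma> (es!j) * v (es!j) z))"
        proof -
          have "(\<Sum>j=0..<n. (\<Sum>z\<in>Zs. v (es!i) z * v (es!j) z) * \<gamma> (es!j))
             = (\<Sum>j=0..<n. \<Sum>z\<in>Zs. v (es!i) z * (\<gamma> (es!j) * v (es!j) z))"
            by (simp add: sum_distrib_right sum_distrib_left mult_ac)
          also have "\<dots> = (\<Sum>z\<in>Zs. \<Sum>j=0..<n. v (es!i) z * (\<gamma> (es!j) * v (es!j) z))"
            by (rule sum.swap)
          finally show ?thesis by (simp add: sum_distrib_left)
        qed
        also have "\<dots> = 0" using hz by simp
        finally show "(?M *\<^sub>v c) $ i = 0\<^sub>v n $ i" using i by simp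
      qed (simp add: n_def)
      have "c = 0\<^sub>v n"
      proof (rule ccontr)
        assume "c \<noteq> 0\<^sub>v n"
        moreover have "c \<in> carrier_vec n" by (simp add: c_def)
        ultimately have "det ?M = 0" using det_0_iff_vec_prod_zero[OF M] \<open>?M *\<^sub>v c = 0\<^sub>v n\<close> by blast
        with d show False by simp
      qed
      then have "\<forall>i<n. \<gamma> (es!i) = 0" unfolding c_def
        by (metis index_vec index_zero_vec(1))
      then show "\<forall>e\<in>S. \<gamma> e = 0" using es(2) unfolding n_def by (auto simp: in_set_conv_nth)
    qed
  qed
qed

lemma line_finite:
  fixes a b :: "'i \<Rightarrow> 'z \<Rightarrow> real"
  assumes S: "finite S" and Z: "finite Zs" and a0: "\<And>e z. z \<notin> Zs \<Longrightarrow> a e z = 0"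
    and b0: "\<And>e z. z \<notin> Zs \<Longrightarrow> b e z = 0" and ind: "indepF a S"
  shows "finite {t. \<not> indepF (\<lambda>e z. a e z + t * b e z) S}"
proof -
  obtain es where es: "distinct es" "set es = S" using finite_distinct_list[OF S] by blast
  define n where "n = length es"
  define Gp :: "real poly mat" where "Gp = mat n n (\<lambda>(i,j). \<Sum>z\<in>Zs. [:a (es!i) z, b (es!i) z:] * [:a (es!j) z, b (es!j) z:])"
  have ev: "det (mat n n (\<lambda>(i,j). \<Sum>z\<in>Zs. (a (es!i) z + t * b (es!i) z) * (a (es!j) z + t * b (es!j) z))) = poly (det Gp) t" for t
  proof -
    interpret h: comm_ring_hom "\<lambda>q. poly q t" by unfold_locales auto
    have "map_mat (\<lambda>q. poly q t) Gp = mat n n (\<lambda>(i,j). \<Sum>z\<in>Zs. (a (es!i) z + t * b (es!i) z) * (a (es!j) z + t * b (es!j) z))"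
      by (rule eq_matI) (auto simp: Gp_def poly_sum algebra_simps)
    then show ?thesis using h.hom_det[of Gp] by simp
  qed
  have "indepF (\<lambda>e z. a e z + 0 * b e z) S" using ind by simp
  then have "poly (det Gp) 0 \<noteq> 0"
    using gram_indep[OF es Z, of "\<lambda>e z. a e z + 0 * b e z"] a0 b0 ev[of 0] by (simp add: n_def)
  then have "det Gp \<noteq> 0" by auto
  then have fin: "finite {t. poly (det Gp) t = 0}" by (rule poly_roots_finite)
  have "{t. \<not> indepF (\<lambda>e z. a e z + t * b e z) S} \<subseteq> {t. poly (det Gp) t = 0}"
  proof
    fix t assume "t \<in> {t. \<not> indepF (\<lambda>e z. a e z + t * b e z) S}"
    then have "\<not> indepF (\<lambda>e z. a e z + t * b e z) S" by simp
    then have "det (mat n n (\<lambda>(i,j). \<Sum>z\<in>Zs. (a (es!i) z + t * b (es!i) z) * (a (es!j) z + t * b (es!j) z))) = 0"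
      using gram_indep[OF es Z, of "\<lambda>e z. a e z + t * b e z"] a0 b0 by (simp add: n_def)
    then show "t \<in> {t. poly (det Gp) t = 0}" using ev by simp
  qed
  then show ?thesis using fin finite_subset by blast
qed

definition line :: "('a \<Rightarrow> nat \<Rightarrow> real) \<Rightarrow> ('a \<Rightarrow> nat \<Rightarrow> real) \<Rightarrow> real \<Rightarrow> ('a \<Rightarrow> nat \<Rightarrow> real)" where
  "line p q t = (\<lambda>x i. p x i + t * (q x i - p x i))"

definition good :: "('a \<Rightarrow> nat \<Rightarrow> real) set \<Rightarrow> bool" where
  "good Z \<longleftrightarrow> (\<forall>p q. p \<in> Z \<longrightarrow> finite {t. line p q t \<notin> Z})"

lemma good_Int: "good A \<Longrightarrow> good B \<Longrightarrow> good (A \<inter> B)"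
proof -
  assume A: "good A" and B: "good B"
  show "good (A \<inter> B)" unfolding good_def
  proof (intro allI impI)
    fix p q assume "p \<in> A \<inter> B"
    then have "finite {t. line p q t \<notin> A}" "finite {t. line p q t \<notin> B}" using A B unfolding good_def by auto
    moreover have "{t. line p q t \<notin> A \<inter> B} = {t. line p q t \<notin> A} \<union> {t. line p q t \<notin> B}" by auto
    ultimately show "finite {t. line p q t \<notin> A \<inter> B}" by simp
  qed
qed

lemma good_meet:
  assumes A: "good A" and B: "good B" and p: "p \<in> A" and q: "q \<in> B"
  shows "\<exists>r. r \<in> A \<and> r \<in> B"
proof -
  have F1: "finite {t. line p q t \<notin> A}" using A p unfolding good_def by auto
  have F2: "finite {s. line q p s \<notin> B}" using B q unfolding good_def by auto
  have eq: "line p q t = line q p (1 - t)" for t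
    unfolding line_def by (auto simp: algebra_simps fun_eq_iff)
  have "{t. line p q t \<notin> B} \<subseteq> (\<lambda>s. 1 - s) ` {s. line q p s \<notin> B}"
  proof
    fix t assume "t \<in> {t. line p q t \<notin> B}"
    then have "1 - t \<in> {s. line q p s \<notin> B}" using eq[of t] by simp
    then show "t \<in> (\<lambda>s. 1 - s) ` {s. line q p s \<notin> B}" by (rule rev_image_eqI) simp
  qed
  then have F2': "finite {t. line p q t \<notin> B}" using F2 finite_subset by blast
  have "\<not> (UNIV :: real set) \<subseteq> {t. line p q t \<notin> A} \<union> {t. line p q t \<notin> B}"
    using F1 F2' infinite_UNIV_char_0 finite_subset by (metis finite_Un)
  then obtain t where "line p q t \<in> A" "line p q t \<in> B" by blast
  then show ?thesis by blast
qed

lemma good_family: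
  fixes F :: "('a \<Rightarrow> nat \<Rightarrow> real) \<Rightarrow> 'i \<Rightarrow> 'z \<Rightarrow> real"
  assumes S: "finite S" and Z: "finite Zs" and F0: "\<And>p e z. e \<in> S \<Longrightarrow> z \<notin> Zs \<Longrightarrow> F p e z = 0"
    and lin: "\<And>p q t e z. F (line p q t) e z = F p e z + t * (F q e z - F p e z)"
  shows "good {p. indepF (F p) S}"
  unfolding good_def
proof (intro allI impI)
  fix p q assume "p \<in> {p. indepF (F p) S}"
  then have ind: "indepF (F p) S" by simp
  define G where "G = (\<lambda>p e. if e \<in> S then F p e else (\<lambda>z. 0))"
  have GF: "indepF (G p) S = indepF (F p) S" for p
    by (rule indepF_cong) (simp add: G_def)
  have indG: "indepF (\<lambda>e. if e \<in> S then F p e else (\<lambda>z. 0)) S" using GF[of p] ind by (simp add: G_def)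
  have "finite {t. \<not> indepF (\<lambda>e z. G p e z + t * (G q e z - G p e z)) S}"
    by (rule line_finite[OF S Z]) (use indG in \<open>auto simp: G_def F0\<close>)
  moreover have "(\<lambda>e z. G p e z + t * (G q e z - G p e z)) = G (line p q t)" for t
    by (simp add: lin fun_eq_iff G_def)
  ultimately have "finite {t. \<not> indepF (G (line p q t)) S}" by simp
  then show "finite {t. line p q t \<notin> {p. indepF (F p) S}}" by (simp add: GF)
qed


lemma rig_row_pair:
  assumes "x \<noteq> y"
  shows "rig_row d p {x,y} (w,i) = (if i < d then (if w = x then p x i - p y i else if w = y then p y i - p x i else 0) else 0)"
  using assms by (auto simp: rig_row_def)

lemma rig_row_notin: "w \<notin> e \<Longrightarrow> rig_row d p e (w,i) = 0"
  by (simp add: rig_row_def)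

lemma rig_row_upd: "v \<notin> e \<Longrightarrow> rig_row d (p(v := f)) e = rig_row d p e"
  unfolding rig_row_def by (rule ext) (auto intro!: sum.cong)

lemma rig_row_line: "rig_row d (line p q t) e z = rig_row d p e z + t * (rig_row d q e z - rig_row d p e z)"
  by (cases z) (auto simp: rig_row_def line_def sum_subtractf sum.distrib sum_distrib_left algebra_simps)

lemma rows_indep_eq: "rows_indep d p S = indepF (rig_row d p) S"
  by (simp add: rows_indep_def indepF_def)

lemma good_rows:
  assumes S: "finite S" and fe: "\<forall>e\<in>S. finite e"
  shows "good {p. rows_indep d p S}"
proof -
  have "good {p. indepF (rig_row d p) S}"
  proof (rule good_family[OF S, of "(\<Union>S) \<times> {..<d}"])
    show "finite ((\<Union>S) \<times> {..<d})" using S fe by auto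
  next
    fix p e z assume "e \<in> S" "z \<notin> (\<Union>S) \<times> {..<d}"
    then show "rig_row d p e z = 0" by (cases z) (auto simp: rig_row_def)
  qed (rule rig_row_line)
  then show ?thesis by (simp add: rows_indep_eq)
qed

definition ivec :: "nat \<Rightarrow> ('a \<Rightarrow> nat \<Rightarrow> real) \<Rightarrow> 'a \<Rightarrow> 'a \<Rightarrow> nat \<Rightarrow> real" where
  "ivec d p a u = (\<lambda>i. if i < d then p a i - p u i else 0)"

lemma good_ivec:
  assumes M: "finite M"
  shows "good {p. indepF (ivec d p a) M}"
proof (rule good_family[OF M, of "{..<d}"])
  fix p q t e z show "ivec d (line p q t) a e z = ivec d p a e z + t * (ivec d q a e z - ivec d p a e z)"
    by (auto simp: ivec_def line_def algebra_simps)
qed (auto simp: ivec_def)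

lemma ivec_exists:
  assumes M: "finite M" and a: "a \<notin> M" and c: "card M \<le> d"
  shows "\<exists>p. indepF (ivec d p a) M"
proof -
  obtain ms where ms: "distinct ms" "set ms = M" using finite_distinct_list[OF M] by blast
  define p where "p x i = (if i < length ms \<and> ms ! i = x then -1 else (0::real))" for x i
  have len: "length ms \<le> d" using ms c distinct_card by fastforce
  have iv: "ivec d p a u k = (if u = ms ! k then 1 else 0)" if "u \<in> M" "k < length ms" for u k
    using that a len ms(2) nth_mem[of k ms] by (auto simp: ivec_def p_def)
  have "indepF (ivec d p a) M" unfolding indepF_def
  proof (intro allI impI ballI)
    fix c u assume h: "(\<lambda>z. \<Sum>e\<in>M. c e * ivec d p a e z) = (\<lambda>z. 0)" and u: "u \<in> M"
    then obtain k where k: "k < length ms" "ms ! k = u" using ms(2) by (auto simp: in_set_conv_nth)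
    have "0 = (\<Sum>e\<in>M. c e * ivec d p a e k)" using fun_cong[OF h, of k] by simp
    also have "\<dots> = (\<Sum>e\<in>M. if e = u then c e else 0)"
      by (rule sum.cong) (use iv k in auto)
    also have "\<dots> = c u" using M u by simp
    finally show "c u = 0" by simp
  qed
  then show ?thesis by blast
qed


lemma rig_rank_set_finite: "finite F \<Longrightarrow> finite {card S | S. S \<subseteq> F \<and> rows_indep d p S}"
  by (rule finite_subset[of _ "card ` Pow F"]) auto

lemma rows_indep_empty: "rows_indep d p {}"
  by (simp add: rows_indep_def)

lemma rig_rank_ge:
  assumes "finite F" "S \<subseteq> F" "rows_indep d p S"
  shows "card S \<le> rig_rank d p F"
  unfolding rig_rank_def using assms rig_rank_set_finite[OF assms(1)] by (intro Max_ge) auto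

lemma rig_rank_obtain:
  assumes "finite F"
  shows "\<exists>S\<subseteq>F. rows_indep d p S \<and> card S = rig_rank d p F"
proof -
  have "rig_rank d p F \<in> {card S | S. S \<subseteq> F \<and> rows_indep d p S}"
    unfolding rig_rank_def
    by (intro Max_in rig_rank_set_finite[OF assms]) (use rows_indep_empty[of d p] in blast)
  then show ?thesis by auto
qed

lemma rig_rank_le_card: "finite F \<Longrightarrow> rig_rank d p F \<le> card F"
  using rig_rank_obtain card_mono by metis

lemma r_d_set_finite: "finite F \<Longrightarrow> finite {rig_rank d p F | p. True}"
  by (rule finite_subset[of _ "{..card F}"]) (auto simp: rig_rank_le_card)

lemma rig_rank_le_r_d: "finite F \<Longrightarrow> rig_rank d p F \<le> r_d d F"
  unfolding r_d_def using r_d_set_finite by (intro Max_ge) auto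

lemma r_d_obtain: "finite F \<Longrightarrow> \<exists>p. rig_rank d p F = r_d d F"
proof -
  assume F: "finite F"
  have "r_d d F \<in> {rig_rank d p F | p. True}"
    unfolding r_d_def using r_d_set_finite[OF F] by (intro Max_in) auto
  then show ?thesis by auto
qed

lemma r_d_mono:
  assumes "finite F'" "F \<subseteq> F'"
  shows "r_d d F \<le> r_d d F'"
proof -
  have F: "finite F" using assms finite_subset by blast
  obtain p where p: "rig_rank d p F = r_d d F" using r_d_obtain[OF F] by blast
  obtain S where S: "S \<subseteq> F" "rows_indep d p S" "card S = rig_rank d p F" using rig_rank_obtain[OF F] by blast
  have "card S \<le> rig_rank d p F'" using S assms by (intro rig_rank_ge) auto
  also have "\<dots> \<le> r_d d F'" using assms by (simp add: rig_rank_le_r_d)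
  finally show ?thesis using p S by simp
qed

definition inspan :: "nat \<Rightarrow> ('a \<Rightarrow> nat \<Rightarrow> real) \<Rightarrow> 'a set set \<Rightarrow> ('a \<times> nat \<Rightarrow> real) \<Rightarrow> bool" where
  "inspan d p T x \<longleftrightarrow> (\<exists>\<beta>. x = (\<lambda>z. \<Sum>f\<in>T. \<beta> f * rig_row d p f z))"

lemma inspan_mem: "finite T \<Longrightarrow> e \<in> T \<Longrightarrow> inspan d p T (rig_row d p e)"
proof -
  assume T: "finite T" and e: "e \<in> T"
  have "rig_row d p e = (\<lambda>z. \<Sum>f\<in>T. (if f = e then 1 else 0) * rig_row d p f z)"
  proof
    fix z
    have "(\<Sum>f\<in>T. (if f = e then 1 else 0) * rig_row d p f z) = (\<Sum>f\<in>T. if f = e then rig_row d p f z else 0)"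
      by (rule sum.cong) auto
    also have "\<dots> = rig_row d p e z" using T e by simp
    finally show "rig_row d p e z = (\<Sum>f\<in>T. (if f = e then 1 else 0) * rig_row d p f z)" by simp
  qed
  then show ?thesis unfolding inspan_def by (intro exI[of _ "\<lambda>f. if f = e then 1 else 0"])
qed

lemma ind_extend:
  assumes T: "finite T" and ind: "rows_indep d p T" and dep: "\<not> rows_indep d p (insert e T)" and e: "e \<notin> T"
  shows "inspan d p T (rig_row d p e)"
proof -
  obtain c where c: "(\<lambda>z. \<Sum>f\<in>insert e T. c f * rig_row d p f z) = (\<lambda>z. 0)" "\<exists>f\<in>insert e T. c f \<noteq> 0"
    using dep unfolding rows_indep_def by blast
  have sp: "(\<lambda>z. c e * rig_row d p e z + (\<Sum>f\<in>T. c f * rig_row d p f z)) = (\<lambda>z. 0)"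
    using c(1) T e by simp
  have ce: "c e \<noteq> 0"
  proof
    assume "c e = 0"
    then have "(\<lambda>z. \<Sum>f\<in>T. c f * rig_row d p f z) = (\<lambda>z. 0)" using sp by simp
    then have "\<forall>f\<in>T. c f = 0" using ind unfolding rows_indep_def by blast
    with c(2) \<open>c e = 0\<close> show False by auto
  qed
  have "rig_row d p e = (\<lambda>z. \<Sum>f\<in>T. (- c f / c e) * rig_row d p f z)"
  proof
    fix z
    have "c e * rig_row d p e z + (\<Sum>f\<in>T. c f * rig_row d p f z) = 0" using fun_cong[OF sp, of z] by simp
    then have "rig_row d p e z = - (\<Sum>f\<in>T. c f * rig_row d p f z) / c e" using ce by (simp add: field_simps)
    also have "\<dots> = (\<Sum>f\<in>T. (- c f / c e) * rig_row d p f z)"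
      by (simp add: sum_divide_distrib sum_negf[symmetric])
    finally show "rig_row d p e z = (\<Sum>f\<in>T. (- c f / c e) * rig_row d p f z)" .
  qed
  then show ?thesis unfolding inspan_def by (intro exI[of _ "\<lambda>f. - c f / c e"])
qed

lemma inspan_trans:
  assumes T: "finite T" and S: "finite S" and ST: "\<forall>e\<in>S. inspan d p T (rig_row d p e)" and x: "inspan d p S x"
  shows "inspan d p T x"
proof -
  obtain B where B: "\<forall>e\<in>S. rig_row d p e = (\<lambda>z. \<Sum>f\<in>T. B e f * rig_row d p f z)"
    using ST unfolding inspan_def by metis
  obtain \<alpha> where \<alpha>: "x = (\<lambda>z. \<Sum>e\<in>S. \<alpha> e * rig_row d p e z)" using x unfolding inspan_def by blast
  have "x = (\<lambda>z. \<Sum>f\<in>T. (\<Sum>e\<in>S. \<alpha> e * B e f) * rig_row d p f z)"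
  proof
    fix z
    have "x z = (\<Sum>e\<in>S. \<alpha> e * (\<Sum>f\<in>T. B e f * rig_row d p f z))"
      unfolding \<alpha> using B by (intro sum.cong) (auto dest: fun_cong[of _ _ z])
    also have "\<dots> = (\<Sum>e\<in>S. \<Sum>f\<in>T. \<alpha> e * B e f * rig_row d p f z)"
      by (simp add: sum_distrib_left mult_ac)
    also have "\<dots> = (\<Sum>f\<in>T. \<Sum>e\<in>S. \<alpha> e * B e f * rig_row d p f z)" by (rule sum.swap)
    also have "\<dots> = (\<Sum>f\<in>T. (\<Sum>e\<in>S. \<alpha> e * B e f) * rig_row d p f z)"
      by (simp add: sum_distrib_right)
    finally show "x z = (\<Sum>f\<in>T. (\<Sum>e\<in>S. \<alpha> e * B e f) * rig_row d p f z)" .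
  qed
  then show ?thesis unfolding inspan_def by (intro exI[of _ "\<lambda>f. \<Sum>e\<in>S. \<alpha> e * B e f"])
qed

lemma inspan_dep:
  assumes T: "finite T" and ind: "rows_indep d p (insert e T)" and e: "e \<notin> T"
  shows "\<not> inspan d p T (rig_row d p e)"
proof
  assume "inspan d p T (rig_row d p e)"
  then obtain \<beta> where b: "rig_row d p e = (\<lambda>z. \<Sum>f\<in>T. \<beta> f * rig_row d p f z)" unfolding inspan_def by blast
  define c where "c = \<beta>(e := -1)"
  have "(\<lambda>z. \<Sum>f\<in>insert e T. c f * rig_row d p f z) = (\<lambda>z. 0)"
  proof
    fix z
    have "(\<Sum>f\<in>T. c f * rig_row d p f z) = (\<Sum>f\<in>T. \<beta> f * rig_row d p f z)"
      using e by (intro sum.cong) (auto simp: c_def)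
    then show "(\<Sum>f\<in>insert e T. c f * rig_row d p f z) = 0"
      using T e fun_cong[OF b, of z] by (simp add: c_def)
  qed
  then have "c e = 0" using ind unfolding rows_indep_def by blast
  then show False by (simp add: c_def)
qed


lemma star_inj: "v \<notin> N \<Longrightarrow> inj_on (\<lambda>u. {v,u}) N"
  by (auto simp: inj_on_def doubleton_eq_iff)

lemma star_card: "v \<notin> N \<Longrightarrow> card ((\<lambda>u. {v,u}) ` N) = card N"
  by (simp add: card_image star_inj)

lemma star_sum: "v \<notin> N \<Longrightarrow> (\<Sum>e\<in>(\<lambda>u. {v,u}) ` N. f e) = (\<Sum>u\<in>N. f {v,u})"
  by (simp add: sum.reindex star_inj)

lemma row_star_v: "v \<noteq> u \<Longrightarrow> rig_row d p {v,u} (v,i) = ivec d p v u i"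
  by (simp add: rig_row_pair ivec_def)

lemma small_case:
  assumes H0: "finite H0" "\<forall>e\<in>H0. finite e \<and> v \<notin> e" and N: "finite N" "v \<notin> N" "card N \<le> d"
  shows "r_d d H0 + card N \<le> r_d d (H0 \<union> (\<lambda>u. {v,u}) ` N)"
proof -
  let ?St = "(\<lambda>u. {v,u}) ` N"
  obtain p0 where p0: "rig_rank d p0 H0 = r_d d H0" using r_d_obtain[OF H0(1)] by blast
  obtain S where S: "S \<subseteq> H0" "rows_indep d p0 S" "card S = rig_rank d p0 H0"
    using rig_rank_obtain[OF H0(1)] by blast
  have finS: "finite S" using S(1) H0(1) finite_subset by blast
  have g1: "good {p. rows_indep d p S}" using S(1) H0(2) finS by (intro good_rows) auto
  have g2: "good {p. indepF (ivec d p v) N}" using N by (intro good_ivec)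
  obtain q where q: "indepF (ivec d q v) N" using ivec_exists[OF N(1) N(2) N(3)] by blast
  have "p0 \<in> {p. rows_indep d p S}" "q \<in> {p. indepF (ivec d p v) N}" using S(2) q by auto
  from good_meet[OF g1 g2 this] obtain p where p: "rows_indep d p S" "indepF (ivec d p v) N"
    by blast
  have disj: "S \<inter> ?St = {}" using S(1) H0(2) by auto
  have finSt: "finite ?St" using N by simp
  have ind: "rows_indep d p (S \<union> ?St)"
    unfolding rows_indep_def
  proof (intro allI impI ballI)
    fix c e assume h: "(\<lambda>z. \<Sum>e\<in>S \<union> ?St. c e * rig_row d p e z) = (\<lambda>z. 0)" and e: "e \<in> S \<union> ?St"
    have split: "(\<Sum>e\<in>S \<union> ?St. c e * rig_row d p e z) = (\<Sum>e\<in>S. c e * rig_row d p e z) + (\<Sum>u\<in>N. c {v,u} * rig_row d p {v,u} z)" for z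
      using sum.union_disjoint[OF finS finSt disj, of "\<lambda>e. c e * rig_row d p e z"] star_sum[OF N(2), of "\<lambda>e. c e * rig_row d p e z"] by simp
    have "(\<lambda>i. \<Sum>u\<in>N. c {v,u} * ivec d p v u i) = (\<lambda>i. 0)"
    proof
      fix i
      have "(\<Sum>e\<in>S. c e * rig_row d p e (v,i)) = 0"
        using S(1) H0(2) by (intro sum.neutral) (auto simp: rig_row_notin)
      moreover have "(\<Sum>u\<in>N. c {v,u} * rig_row d p {v,u} (v,i)) = (\<Sum>u\<in>N. c {v,u} * ivec d p v u i)"
        using N(2) by (intro sum.cong refl, subst row_star_v) auto
      ultimately show "(\<Sum>u\<in>N. c {v,u} * ivec d p v u i) = 0"
        using split[of "(v,i)"] fun_cong[OF h, of "(v,i)"] by simp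
    qed
    then have cu: "\<forall>u\<in>N. c {v,u} = 0" using spec[OF p(2)[unfolded indepF_def], of "\<lambda>u. c {v,u}"] by simp
    have "(\<lambda>z. \<Sum>e\<in>S. c e * rig_row d p e z) = (\<lambda>z. 0)"
    proof
      fix z
      have "(\<Sum>u\<in>N. c {v,u} * rig_row d p {v,u} z) = 0" using cu by simp
      then show "(\<Sum>e\<in>S. c e * rig_row d p e z) = 0" using split[of z] fun_cong[OF h, of z] by simp
    qed
    then have "\<forall>e\<in>S. c e = 0" using p(1) unfolding rows_indep_def by blast
    then show "c e = 0" using e cu by auto
  qed
  have card: "card (S \<union> ?St) = card S + card N"
    using card_Un_disjoint[OF finS finSt disj] star_card[OF N(2)] by simp
  have "card (S \<union> ?St) \<le> rig_rank d p (H0 \<union> ?St)"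
    using S(1) ind H0(1) N(1) by (intro rig_rank_ge) auto
  also have "\<dots> \<le> r_d d (H0 \<union> ?St)" using H0(1) N(1) by (intro rig_rank_le_r_d) auto
  finally show ?thesis using card S(3) p0 by simp
qed


lemma rows_indep_subset:
  assumes T: "finite T" and ST: "S \<subseteq> T" and ind: "rows_indep d p T"
  shows "rows_indep d p S"
  unfolding rows_indep_def
proof (intro allI impI ballI)
  fix c e assume h: "(\<lambda>z. \<Sum>e\<in>S. c e * rig_row d p e z) = (\<lambda>z. 0)" and e: "e \<in> S"
  define c' where "c' f = (if f \<in> S then c f else 0)" for f
  have "(\<lambda>z. \<Sum>f\<in>T. c' f * rig_row d p f z) = (\<lambda>z. 0)"
  proof
    fix z
    have "(\<Sum>f\<in>T. c' f * rig_row d p f z) = (\<Sum>f\<in>S. c' f * rig_row d p f z)"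
      using T ST by (intro sum.mono_neutral_right) (auto simp: c'_def)
    also have "\<dots> = (\<Sum>f\<in>S. c f * rig_row d p f z)" by (intro sum.cong) (auto simp: c'_def)
    finally show "(\<Sum>f\<in>T. c' f * rig_row d p f z) = 0" using fun_cong[OF h, of z] by simp
  qed
  then have "c' e = 0" using ind e ST unfolding rows_indep_def by blast
  then show "c e = 0" using e by (simp add: c'_def)
qed

lemma large_case:
  assumes H0: "finite H0" "\<forall>e\<in>H0. finite e \<and> v \<notin> e"
    and N: "finite N" "v \<notin> N" "card N = d + 1"
    and ab: "a \<in> N" "b \<in> N" "a \<noteq> b"
    and G: "finite G" "H0 \<subseteq> G" "\<forall>e\<in>G. finite e"
    and clo: "r_d d (insert {a,b} G) = r_d d G + 1"
  shows "r_d d H0 + d + 1 \<le> r_d d (H0 \<union> (\<lambda>u. {v,u}) ` N)"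
proof (rule ccontr)
  let ?St = "(\<lambda>u. {v,u}) ` N"
  assume "\<not> ?thesis"
  then have le: "r_d d (H0 \<union> ?St) \<le> r_d d H0 + d" by simp
  have va: "v \<noteq> a" "v \<noteq> b" using ab N(2) by auto
  obtain p0 where p0: "rig_rank d p0 H0 = r_d d H0" using r_d_obtain[OF H0(1)] by blast
  obtain S where S: "S \<subseteq> H0" "rows_indep d p0 S" "card S = rig_rank d p0 H0"
    using rig_rank_obtain[OF H0(1)] by blast
  have finS: "finite S" using S(1) H0(1) finite_subset by blast
  have G': "finite (insert {a,b} G)" using G by simp
  obtain p1 where p1: "rig_rank d p1 (insert {a,b} G) = r_d d (insert {a,b} G)" using r_d_obtain[OF G'] by blast
  obtain T where T: "T \<subseteq> insert {a,b} G" "rows_indep d p1 T" "card T = rig_rank d p1 (insert {a,b} G)"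
    using rig_rank_obtain[OF G'] by blast
  have finT: "finite T" using T(1) G' finite_subset by blast
  have abT: "{a,b} \<in> T"
  proof (rule ccontr)
    assume "{a,b} \<notin> T"
    then have "T \<subseteq> G" using T(1) by auto
    then have "card T \<le> rig_rank d p1 G" using T(2) G(1) by (intro rig_rank_ge) auto
    also have "\<dots> \<le> r_d d G" using G(1) by (rule rig_rank_le_r_d)
    finally show False using T(3) p1 clo by simp
  qed
  define T' where "T' = T - {{a,b}}"
  have T'G: "T' \<subseteq> G" using T(1) by (auto simp: T'_def)
  have finT': "finite T'" using finT by (simp add: T'_def)
  have cardT': "card T' = r_d d G" using T(3) p1 clo abT finT by (simp add: T'_def)
  have TT': "T = insert {a,b} T'" "{a,b} \<notin> T'" using abT by (auto simp: T'_def)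
  have g1: "good {p. rows_indep d p S}" using S(1) H0(2) finS by (intro good_rows) auto
  have g2: "good {p. indepF (ivec d p a) (N - {a})}" using N by (intro good_ivec) simp
  have g3: "good {p. rows_indep d p T}" using finT T(1) G(3) by (intro good_rows) auto
  have cNa: "card (N - {a}) = d" using N ab by simp
  obtain q where q: "indepF (ivec d q a) (N - {a})"
    using ivec_exists[of "N - {a}" a d] N(1) cNa by auto
  have "p0 \<in> {p. rows_indep d p S}" "q \<in> {p. indepF (ivec d p a) (N - {a})}" using S(2) q by auto
  from good_meet[OF g1 g2 this] obtain r where
    r: "r \<in> {p. rows_indep d p S} \<inter> {p. indepF (ivec d p a) (N - {a})}" by blast
  have "p1 \<in> {p. rows_indep d p T}" using T(2) by simp
  from good_meet[OF good_Int[OF g1 g2] g3 r this] obtain p where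
    p: "rows_indep d p S" "indepF (ivec d p a) (N - {a})" "rows_indep d p T" by blast
  define p' where "p' = p(v := (\<lambda>i. (p a i + p b i) / 2))"
  have rowS: "rig_row d p' e = rig_row d p e" if "e \<in> S" for e
    using that S(1) H0(2) by (auto simp: p'_def rig_row_upd)
  have indS': "rows_indep d p' S"
    using p(1) indepF_cong[of S "rig_row d p'" "rig_row d p"] rowS by (simp add: rows_indep_eq)
  have disj: "S \<inter> ?St = {}" using S(1) H0(2) by auto
  have finSt: "finite ?St" using N by simp
  have card: "card (S \<union> ?St) = r_d d H0 + d + 1"
    using card_Un_disjoint[OF finS finSt disj] star_card[OF N(2)] S(3) p0 N(3) by simp
  have notind: "\<not> rows_indep d p' (S \<union> ?St)"
  proof
    assume "rows_indep d p' (S \<union> ?St)"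
    then have "card (S \<union> ?St) \<le> rig_rank d p' (H0 \<union> ?St)"
      using S(1) H0(1) N(1) by (intro rig_rank_ge) auto
    also have "\<dots> \<le> r_d d (H0 \<union> ?St)" using H0(1) N(1) by (intro rig_rank_le_r_d) auto
    finally show False using card le by simp
  qed
  obtain c where c: "(\<lambda>z. \<Sum>e\<in>S \<union> ?St. c e * rig_row d p' e z) = (\<lambda>z. 0)" "\<exists>e\<in>S \<union> ?St. c e \<noteq> 0"
    using notind unfolding rows_indep_def by blast
  have split: "(\<Sum>e\<in>S \<union> ?St. c e * rig_row d p' e z) = (\<Sum>e\<in>S. c e * rig_row d p' e z) + (\<Sum>u\<in>N. c {v,u} * rig_row d p' {v,u} z)" for z
    using sum.union_disjoint[OF finS finSt disj, of "\<lambda>e. c e * rig_row d p' e z"] star_sum[OF N(2), of "\<lambda>e. c e * rig_row d p' e z"] by simp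
  define l where "l u = c {v,u}" for u
  define L where "L = (\<Sum>x\<in>N. l x)"
  have vcol: "(\<Sum>u\<in>N. l u * (p' v i - p u i)) = 0" if "i < d" for i
  proof -
    have "(\<Sum>e\<in>S. c e * rig_row d p' e (v,i)) = 0"
      using S(1) H0(2) by (intro sum.neutral) (auto simp: rig_row_notin)
    moreover have "(\<Sum>u\<in>N. c {v,u} * rig_row d p' {v,u} (v,i)) = (\<Sum>u\<in>N. l u * (p' v i - p u i))"
    proof (intro sum.cong refl)
      fix u assume "u \<in> N"
      then have "v \<noteq> u" using N(2) by auto
      then show "c {v,u} * rig_row d p' {v,u} (v,i) = l u * (p' v i - p u i)"
        using that by (simp add: rig_row_pair l_def p'_def)
    qed
    ultimately show ?thesis using split[of "(v,i)"] fun_cong[OF c(1), of "(v,i)"] by simp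
  qed
  define \<mu> where "\<mu> u = l u - (if u = b then L / 2 else 0)" for u
  have bNa: "b \<in> N - {a}" using ab by simp
  have "(\<lambda>i. \<Sum>u\<in>N - {a}. \<mu> u * ivec d p a u i) = (\<lambda>i. 0)"
  proof
    fix i
    show "(\<Sum>u\<in>N - {a}. \<mu> u * ivec d p a u i) = 0"
    proof (cases "i < d")
      case False then show ?thesis by (simp add: ivec_def)
    next
      case True
      have e1: "(\<Sum>u\<in>N. l u * (p' v i - p u i)) = (\<Sum>u\<in>N. l u * (p a i - p u i)) - L * (p a i - p b i) / 2"
      proof -
        have "(\<Sum>u\<in>N. l u * (p' v i - p u i)) = (\<Sum>u\<in>N. l u * (p a i - p u i) - l u * (p a i - p b i) / 2)"
          by (intro sum.cong refl) (simp add: p'_def field_simps)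
        also have "\<dots> = (\<Sum>u\<in>N. l u * (p a i - p u i)) - (\<Sum>u\<in>N. l u) * (p a i - p b i) / 2"
          by (simp add: sum_subtractf sum_distrib_right sum_divide_distrib)
        finally show ?thesis by (simp add: L_def)
      qed
      have e2: "(\<Sum>u\<in>N. l u * (p a i - p u i)) = (\<Sum>u\<in>N - {a}. l u * (p a i - p u i))"
        using sum.remove[OF N(1) ab(1), of "\<lambda>u. l u * (p a i - p u i)"] by simp
      have e3: "(\<Sum>u\<in>N - {a}. \<mu> u * ivec d p a u i) = (\<Sum>u\<in>N - {a}. l u * (p a i - p u i)) - L / 2 * (p a i - p b i)"
      proof -
        have "(\<Sum>u\<in>N - {a}. \<mu> u * ivec d p a u i) = (\<Sum>u\<in>N - {a}. l u * (p a i - p u i) - (if u = b then L / 2 * (p a i - p b i) else 0))"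
          using True by (intro sum.cong refl) (simp add: \<mu>_def ivec_def algebra_simps)
        also have "\<dots> = (\<Sum>u\<in>N - {a}. l u * (p a i - p u i)) - (\<Sum>u\<in>N - {a}. (if u = b then L / 2 * (p a i - p b i) else 0))"
          by (simp add: sum_subtractf)
        also have "(\<Sum>u\<in>N - {a}. (if u = b then L / 2 * (p a i - p b i) else 0)) = L / 2 * (p a i - p b i)"
          using bNa N(1) by simp
        finally show ?thesis .
      qed
      show ?thesis using e1 e2 e3 vcol[OF True] by simp
    qed
  qed
  then have mu0: "\<forall>u\<in>N - {a}. \<mu> u = 0" using spec[OF p(2)[unfolded indepF_def], of \<mu>] by simp
  have l0: "l u = 0" if "u \<in> N" "u \<noteq> a" "u \<noteq> b" for u
    using mu0 that by (auto simp: \<mu>_def)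
  have lb: "l b = L / 2" using mu0 bNa ab by (auto simp: \<mu>_def)
  have LL: "L = l a + l b"
  proof -
    have "L = (\<Sum>x\<in>N. (if x = a then l a else 0) + (if x = b then l b else 0))"
      unfolding L_def using l0 ab(3) by (intro sum.cong refl) auto
    also have "\<dots> = l a + l b" using ab N(1) by (simp add: sum.distrib)
    finally show ?thesis .
  qed
  have lab: "l a = l b" using lb LL by simp
  show False
  proof (cases "l a = 0")
    case True
    then have lz: "\<forall>u\<in>N. c {v,u} = 0" using l0 lab by (auto simp: l_def)
    have "(\<lambda>z. \<Sum>e\<in>S. c e * rig_row d p' e z) = (\<lambda>z. 0)"
    proof
      fix z
      have "(\<Sum>u\<in>N. c {v,u} * rig_row d p' {v,u} z) = 0" using lz by simp
      then show "(\<Sum>e\<in>S. c e * rig_row d p' e z) = 0" using split[of z] fun_cong[OF c(1), of z] by simp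
    qed
    then have "\<forall>e\<in>S. c e = 0" using indS' unfolding rows_indep_def by blast
    then show False using c(2) lz by auto
  next
    case False
    have pab: "rig_row d p' {v,a} z + rig_row d p' {v,b} z = rig_row d p {a,b} z / 2" for z
    proof (cases z)
      case (Pair w i)
      then show ?thesis using va ab(3) by (auto simp: rig_row_pair p'_def field_simps)
    qed
    have star: "(\<Sum>u\<in>N. c {v,u} * rig_row d p' {v,u} z) = l a * (rig_row d p {a,b} z / 2)" for z
    proof -
      have "(\<Sum>u\<in>N. c {v,u} * rig_row d p' {v,u} z)
          = (\<Sum>u\<in>N. (if u = a then l a * rig_row d p' {v,a} z else 0) + (if u = b then l a * rig_row d p' {v,b} z else 0))"
        using l0 lab ab(3) by (intro sum.cong refl) (auto simp: l_def)
      also have "\<dots> = l a * (rig_row d p' {v,a} z + rig_row d p' {v,b} z)"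
        using ab N(1) by (simp add: sum.distrib algebra_simps)
      finally show ?thesis by (simp add: pab)
    qed
    have "rig_row d p {a,b} = (\<lambda>z. \<Sum>e\<in>S. (- 2 * c e / l a) * rig_row d p e z)"
    proof
      fix z
      have "(\<Sum>e\<in>S. c e * rig_row d p e z) + l a * (rig_row d p {a,b} z / 2) = 0"
        using split[of z] fun_cong[OF c(1), of z] star[of z] rowS by simp
      then have "rig_row d p {a,b} z = - 2 * (\<Sum>e\<in>S. c e * rig_row d p e z) / l a"
        using False by (simp add: field_simps)
      also have "\<dots> = (\<Sum>e\<in>S. (- 2 * c e / l a) * rig_row d p e z)"
        by (simp add: sum_divide_distrib sum_distrib_left mult_ac)
      finally show "rig_row d p {a,b} z = (\<Sum>e\<in>S. (- 2 * c e / l a) * rig_row d p e z)" .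
    qed
    then have spS: "inspan d p S (rig_row d p {a,b})" unfolding inspan_def
      by (intro exI[of _ "\<lambda>e. - 2 * c e / l a"])
    have indT': "rows_indep d p T'" using rows_indep_subset[OF finT _ p(3)] by (auto simp: T'_def)
    have "\<forall>e\<in>S. inspan d p T' (rig_row d p e)"
    proof
      fix e assume eS: "e \<in> S"
      show "inspan d p T' (rig_row d p e)"
      proof (cases "e \<in> T'")
        case True then show ?thesis using finT' by (rule inspan_mem[rotated])
      next
        case False
        have eG: "e \<in> G" using eS S(1) G(2) by auto
        have "\<not> rows_indep d p (insert e T')"
        proof
          assume "rows_indep d p (insert e T')"
          then have "card (insert e T') \<le> rig_rank d p G" using eG T'G G(1) by (intro rig_rank_ge) auto
          also have "\<dots> \<le> r_d d G" using G(1) by (rule rig_rank_le_r_d)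
          finally show False using False finT' cardT' by simp
        qed
        then show ?thesis using ind_extend[OF finT' indT' _ False] by simp
      qed
    qed
    then have "inspan d p T' (rig_row d p {a,b})" using inspan_trans[OF finT' finS _ spS] by simp
    moreover have "\<not> inspan d p T' (rig_row d p {a,b})"
      using inspan_dep[OF finT' _ TT'(2)] p(3) TT'(1) by simp
    ultimately show False by simp
  qed
qed


lemma graph_finite_E: "graph V E \<Longrightarrow> finite E"
proof -
  assume g: "graph V E"
  have "E \<subseteq> Pow V"
  proof
    fix e assume "e \<in> E"
    then obtain x y where "e = {x,y}" "x \<in> V" "y \<in> V" using g unfolding graph_def by blast
    then show "e \<in> Pow V" by simp
  qed
  moreover have "finite V" using g by (simp add: graph_def)
  ultimately show ?thesis using finite_subset by blast
qed

lemma graph_edge_finite: "graph V E \<Longrightarrow> e \<in> E \<Longrightarrow> finite e"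
proof -
  assume "graph V E" "e \<in> E"
  then obtain x y where "e = {x,y}" unfolding graph_def by blast
  then show "finite e" by simp
qed

lemma graph_no_loop: "graph V E \<Longrightarrow> {v} \<notin> E"
proof
  assume "graph V E" "{v} \<in> E"
  then obtain x y where xy: "{v} = {x,y}" "x \<noteq> y" unfolding graph_def by blast
  have "x \<in> {v}" "y \<in> {v}" using xy(1) by blast+
  with xy(2) show False by simp
qed

lemma graph_edge_V: "graph V E \<Longrightarrow> {u,w} \<in> E \<Longrightarrow> u \<in> V"
proof -
  assume "graph V E" "{u,w} \<in> E"
  then obtain x y where xy: "{u,w} = {x,y}" "x \<in> V" "y \<in> V" unfolding graph_def by blast
  have "u \<in> {x,y}" using xy(1) by blast
  with xy show "u \<in> V" by blast
qed

lemma rc_pi_bound: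
  assumes g: "graph V E" and v: "v \<in> V" and clo: "R_closed d V E"
    and nc: "\<not> contains_clique V E (d + 2)"
  shows "real (min (card {u. {u,v} \<in> E \<and> precedes \<pi> u v}) (d + 1)) \<le> real_of_int (rc_star_pi d E v \<pi>)"
proof -
  define N where "N = {u. {u,v} \<in> E \<and> precedes \<pi> u v}"
  define H0 where "H0 = E - edges_at E v"
  have finE: "finite E" using g by (rule graph_finite_E)
  have H0: "finite H0" "\<forall>e\<in>H0. finite e \<and> v \<notin> e"
    using finE graph_edge_finite[OF g] by (auto simp: H0_def edges_at_def)
  have NV: "N \<subseteq> V" using graph_edge_V[OF g] by (auto simp: N_def)
  have finN: "finite N" using NV g finite_subset unfolding graph_def by blast
  have vN: "v \<notin> N" using graph_no_loop[OF g, of v] by (auto simp: N_def)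
  have before: "edges_at_before E v \<pi> = (\<lambda>u. {v,u}) ` N"
    by (auto simp: edges_at_before_def N_def insert_commute)
  have rc: "rc_star_pi d E v \<pi> = int (r_d d (H0 \<union> (\<lambda>u. {v,u}) ` N)) - int (r_d d H0)"
    by (simp add: rc_star_pi_def before H0_def)
  show ?thesis
  proof (cases "card N \<le> d")
    case True
    have "r_d d H0 + card N \<le> r_d d (H0 \<union> (\<lambda>u. {v,u}) ` N)"
      using small_case[OF H0 finN vN True] .
    then show ?thesis using True by (simp add: rc N_def[symmetric])
  next
    case False
    obtain N' where N': "N' \<subseteq> N" "card N' = d + 1" "finite N'"
      using obtain_subset_with_card_n[of "d + 1" N] False by auto
    have vN': "v \<notin> N'" using vN N' by auto
    have "\<exists>a\<in>N'. \<exists>b\<in>N'. a \<noteq> b \<and> {a,b} \<notin> E"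
    proof (rule ccontr)
      assume "\<not> ?thesis"
      then have cl: "\<forall>a\<in>N'. \<forall>b\<in>N'. a \<noteq> b \<longrightarrow> {a,b} \<in> E" by blast
      have "insert v N' \<subseteq> V" using N' NV v by auto
      moreover have "card (insert v N') = d + 2" using N' vN' by simp
      moreover have "\<forall>x\<in>insert v N'. \<forall>y\<in>insert v N'. x \<noteq> y \<longrightarrow> {x,y} \<in> E"
        using cl N'(1) by (auto simp: N_def insert_commute)
      ultimately have "contains_clique V E (d + 2)" unfolding contains_clique_def by blast
      with nc show False by simp
    qed
    then obtain a b where ab: "a \<in> N'" "b \<in> N'" "a \<noteq> b" "{a,b} \<notin> E" by blast
    have abV: "a \<in> V" "b \<in> V" using ab N' NV by auto
    have cl: "r_d d (insert {a,b} E) = r_d d E + 1"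
      using clo abV ab unfolding R_closed_def by blast
    have "r_d d H0 + d + 1 \<le> r_d d (H0 \<union> (\<lambda>u. {v,u}) ` N')"
      by (rule large_case[OF H0 N'(3) vN' N'(2) ab(1-3) finE _ _ cl])
         (use graph_edge_finite[OF g] in \<open>auto simp: H0_def\<close>)
    also have "\<dots> \<le> r_d d (H0 \<union> (\<lambda>u. {v,u}) ` N)"
      using N'(1) H0(1) finN by (intro r_d_mono) auto
    finally show ?thesis using False by (simp add: rc N_def[symmetric])
  qed
qed


definition rank_in :: "'a set \<Rightarrow> 'a list \<Rightarrow> 'a \<Rightarrow> nat" where
  "rank_in W \<pi> w = card {u\<in>W. precedes \<pi> u w}"

definition sw :: "'a \<Rightarrow> 'a \<Rightarrow> 'a \<Rightarrow> 'a" where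
  "sw v w x = (if x = v then w else if x = w then v else x)"

lemma sw_sw[simp]: "sw v w (sw v w x) = x"
  by (simp add: sw_def)

lemma sw_eq_iff: "sw v w x = y \<longleftrightarrow> x = sw v w y"
  by (auto simp: sw_def)

lemma precedes_map_sw: "precedes (map (sw v w) \<pi>) x y \<longleftrightarrow> precedes \<pi> (sw v w x) (sw v w y)"
proof -
  have eq: "(map (sw v w) \<pi> ! i = x) \<longleftrightarrow> (\<pi> ! i = sw v w x)" if "i < length \<pi>" for i x
    using that by (auto simp: sw_eq_iff)
  show ?thesis unfolding precedes_def
  proof
    assume "\<exists>i j. i < j \<and> j < length (map (sw v w) \<pi>) \<and> map (sw v w) \<pi> ! i = x \<and> map (sw v w) \<pi> ! j = y"
    then obtain i j where ij: "i < j" "j < length \<pi>" "map (sw v w) \<pi> ! i = x" "map (sw v w) \<pi> ! j = y" by auto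
    then have "\<pi> ! i = sw v w x" "\<pi> ! j = sw v w y" using eq by auto
    with ij show "\<exists>i j. i < j \<and> j < length \<pi> \<and> \<pi> ! i = sw v w x \<and> \<pi> ! j = sw v w y" by blast
  next
    assume "\<exists>i j. i < j \<and> j < length \<pi> \<and> \<pi> ! i = sw v w x \<and> \<pi> ! j = sw v w y"
    then obtain i j where ij: "i < j" "j < length \<pi>" "\<pi> ! i = sw v w x" "\<pi> ! j = sw v w y" by auto
    then have m: "map (sw v w) \<pi> ! i = x" "map (sw v w) \<pi> ! j = y" using eq by auto
    show "\<exists>i j. i < j \<and> j < length (map (sw v w) \<pi>) \<and> map (sw v w) \<pi> ! i = x \<and> map (sw v w) \<pi> ! j = y"
      using ij m by (intro exI[of _ i] exI[of _ j]) simp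
  qed
qed

lemma sw_image: "v \<in> A \<Longrightarrow> w \<in> A \<Longrightarrow> sw v w ` A = A"
proof
  assume "v \<in> A" "w \<in> A"
  then show "sw v w ` A \<subseteq> A" by (auto simp: sw_def)
  show "A \<subseteq> sw v w ` A"
  proof
    fix x assume "x \<in> A"
    then have "sw v w x \<in> A" using \<open>v \<in> A\<close> \<open>w \<in> A\<close> by (auto simp: sw_def)
    then show "x \<in> sw v w ` A" by (rule rev_image_eqI) simp
  qed
qed

lemma inj_sw: "inj (sw v w)"
  by (rule injI) (metis sw_sw)

lemma map_sw_perm:
  assumes "v \<in> V" "w \<in> V" "\<pi> \<in> permutations_of_set V"
  shows "map (sw v w) \<pi> \<in> permutations_of_set V"
  using assms sw_image[of v V w] inj_sw[of v w]
  by (auto simp: permutations_of_set_def distinct_map inj_on_def)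

lemma bij_map_sw:
  assumes "v \<in> V" "w \<in> V"
  shows "bij_betw (map (sw v w)) (permutations_of_set V) (permutations_of_set V)"
  by (rule bij_betw_byWitness[where f' = "map (sw v w)"])
     (auto simp: map_sw_perm[OF assms] comp_def)

lemma rank_sw:
  assumes "v \<in> W" "w \<in> W"
  shows "rank_in W (map (sw v w) \<pi>) w = rank_in W \<pi> v"
proof -
  have "{u\<in>W. precedes (map (sw v w) \<pi>) u w} = {u\<in>W. precedes \<pi> (sw v w u) v}"
    by (auto simp: precedes_map_sw sw_def)
  moreover have "{u\<in>W. precedes \<pi> u v} = sw v w ` {u\<in>W. precedes \<pi> (sw v w u) v}"
  proof
    show "{u\<in>W. precedes \<pi> u v} \<subseteq> sw v w ` {u\<in>W. precedes \<pi> (sw v w u) v}"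
    proof
      fix x assume x: "x \<in> {u\<in>W. precedes \<pi> u v}"
      then have "sw v w x \<in> {u\<in>W. precedes \<pi> (sw v w u) v}" using assms by (auto simp: sw_def)
      then show "x \<in> sw v w ` {u\<in>W. precedes \<pi> (sw v w u) v}" by (rule rev_image_eqI) simp
    qed
    show "sw v w ` {u\<in>W. precedes \<pi> (sw v w u) v} \<subseteq> {u\<in>W. precedes \<pi> u v}"
      using assms by (auto simp: sw_def)
  qed
  ultimately show ?thesis unfolding rank_in_def
    by (simp add: card_image inj_on_subset[OF inj_sw])
qed

lemma sum_rank_swap:
  assumes "v \<in> W" "w \<in> W" "W \<subseteq> V"
  shows "(\<Sum>\<pi>\<in>permutations_of_set V. g (rank_in W \<pi> w)) = (\<Sum>\<pi>\<in>permutations_of_set V. g (rank_in W \<pi> v))"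
proof -
  have vw: "v \<in> V" "w \<in> V" using assms by auto
  have "(\<Sum>\<pi>\<in>permutations_of_set V. g (rank_in W \<pi> w)) = (\<Sum>\<pi>\<in>permutations_of_set V. g (rank_in W (map (sw v w) \<pi>) w))"
    using sum.reindex_bij_betw[OF bij_map_sw[OF vw], of "\<lambda>\<pi>. g (rank_in W \<pi> w)"] by simp
  also have "\<dots> = (\<Sum>\<pi>\<in>permutations_of_set V. g (rank_in W \<pi> v))"
    using rank_sw[OF assms(1,2)] by simp
  finally show ?thesis .
qed

lemma rank_bij:
  fixes f :: "'a \<Rightarrow> nat"
  assumes W: "finite W" and inj: "inj_on f W"
  shows "bij_betw (\<lambda>w. card {u\<in>W. f u < f w}) W {..<card W}"
proof -
  let ?r = "\<lambda>w. card {u\<in>W. f u < f w}"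
  have lt: "?r w1 < ?r w2" if "w1 \<in> W" "w2 \<in> W" "f w1 < f w2" for w1 w2
  proof (rule psubset_card_mono)
    show "finite {u\<in>W. f u < f w2}" using W by simp
    show "{u\<in>W. f u < f w1} \<subset> {u\<in>W. f u < f w2}" using that by auto
  qed
  have injr: "inj_on ?r W"
  proof (rule inj_onI)
    fix x y assume xy: "x \<in> W" "y \<in> W" "?r x = ?r y"
    show "x = y"
    proof (rule ccontr)
      assume "x \<noteq> y"
      then have "f x \<noteq> f y" using inj xy by (auto dest: inj_onD)
      then have "f x < f y \<or> f y < f x" by auto
      then show False using lt[of x y] lt[of y x] xy by auto
    qed
  qed
  have sub: "?r ` W \<subseteq> {..<card W}"
  proof
    fix x assume "x \<in> ?r ` W"
    then obtain w where w: "w \<in> W" "x = ?r w" by blast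
    have "{u\<in>W. f u < f w} \<subset> W" using w by auto
    then have "?r w < card W" using W by (intro psubset_card_mono)
    then show "x \<in> {..<card W}" using w by simp
  qed
  have "card (?r ` W) = card {..<card W}" using card_image[OF injr] by simp
  then have "?r ` W = {..<card W}" using sub by (intro card_subset_eq) auto
  then show ?thesis using injr by (simp add: bij_betw_def)
qed

lemma precedes_pos:
  assumes d: "distinct \<pi>" and u: "u \<in> set \<pi>" and w: "w \<in> set \<pi>"
  shows "precedes \<pi> u w \<longleftrightarrow> inv_into {..<length \<pi>} ((!) \<pi>) u < inv_into {..<length \<pi>} ((!) \<pi>) w"
proof -
  have inj: "inj_on ((!) \<pi>) {..<length \<pi>}" using d by (simp add: inj_on_nth)
  have im: "(!) \<pi> ` {..<length \<pi>} = set \<pi>" by (auto simp: set_conv_nth)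
  define iu where "iu = inv_into {..<length \<pi>} ((!) \<pi>) u"
  define iw where "iw = inv_into {..<length \<pi>} ((!) \<pi>) w"
  have iu: "iu < length \<pi>" "\<pi> ! iu = u"
    using u im inv_into_into[of u "(!) \<pi>" "{..<length \<pi>}"] f_inv_into_f[of u "(!) \<pi>"] by (auto simp: iu_def)
  have iw: "iw < length \<pi>" "\<pi> ! iw = w"
    using w im inv_into_into[of w "(!) \<pi>" "{..<length \<pi>}"] f_inv_into_f[of w "(!) \<pi>"] by (auto simp: iw_def)
  have "precedes \<pi> u w \<longleftrightarrow> iu < iw"
  proof
    assume "precedes \<pi> u w"
    then obtain i j where ij: "i < j" "j < length \<pi>" "\<pi> ! i = u" "\<pi> ! j = w" unfolding precedes_def by blast
    have "i = iu" using ij iu nth_eq_iff_index_eq[OF d, of i iu] by simp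
    moreover have "j = iw" using ij iw nth_eq_iff_index_eq[OF d, of j iw] by simp
    ultimately show "iu < iw" using ij by simp
  next
    assume "iu < iw" then show "precedes \<pi> u w" unfolding precedes_def using iu iw by blast
  qed
  then show ?thesis by (simp add: iu_def iw_def)
qed

lemma sum_ranks:
  assumes W: "finite W" "W \<subseteq> V" and \<pi>: "\<pi> \<in> permutations_of_set V"
  shows "(\<Sum>w\<in>W. g (rank_in W \<pi> w)) = (\<Sum>j<card W. g j)"
proof -
  define f where "f = inv_into {..<length \<pi>} ((!) \<pi>)"
  have d: "distinct \<pi>" "set \<pi> = V" using \<pi> by (auto simp: permutations_of_set_def)
  have im: "(!) \<pi> ` {..<length \<pi>} = set \<pi>" by (auto simp: set_conv_nth)
  have injf: "inj_on f W"
  proof (rule inj_onI)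
    fix x y assume "x \<in> W" "y \<in> W" "f x = f y"
    moreover have "x \<in> (!) \<pi> ` {..<length \<pi>}" "y \<in> (!) \<pi> ` {..<length \<pi>}"
    proof -
      have "x \<in> set \<pi>" "y \<in> set \<pi>" using \<open>x \<in> W\<close> \<open>y \<in> W\<close> W(2) d(2) by auto
      then show "x \<in> (!) \<pi> ` {..<length \<pi>}" "y \<in> (!) \<pi> ` {..<length \<pi>}" using im by simp_all
    qed
    ultimately show "x = y" unfolding f_def using inv_into_injective by metis
  qed
  have rk: "rank_in W \<pi> w = card {u\<in>W. f u < f w}" if "w \<in> W" for w
  proof -
    have "{u\<in>W. precedes \<pi> u w} = {u\<in>W. f u < f w}"
    proof (rule Collect_cong)
      fix u
      show "(u \<in> W \<and> precedes \<pi> u w) = (u \<in> W \<and> f u < f w)"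
      proof (cases "u \<in> W")
        case True
        then have "u \<in> set \<pi>" "w \<in> set \<pi>" using that W d by auto
        then show ?thesis using True precedes_pos[OF d(1)] unfolding f_def by simp
      qed simp
    qed
    then show ?thesis unfolding rank_in_def by simp
  qed
  have "(\<Sum>w\<in>W. g (rank_in W \<pi> w)) = (\<Sum>w\<in>W. g (card {u\<in>W. f u < f w}))"
    using rk by simp
  also have "\<dots> = (\<Sum>j<card W. g j)"
    using sum.reindex_bij_betw[OF rank_bij[OF W(1) injf], of g] by simp
  finally show ?thesis .
qed

lemma count_ranks:
  fixes g :: "nat \<Rightarrow> real"
  assumes V: "finite V" and W: "W \<subseteq> V" and v: "v \<in> W"
  shows "real (card W) * (\<Sum>\<pi>\<in>permutations_of_set V. g (rank_in W \<pi> v))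
       = real (card (permutations_of_set V)) * (\<Sum>j<card W. g j)"
proof -
  have finW: "finite W" using V W finite_subset by blast
  have "real (card W) * (\<Sum>\<pi>\<in>permutations_of_set V. g (rank_in W \<pi> v))
      = (\<Sum>w\<in>W. \<Sum>\<pi>\<in>permutations_of_set V. g (rank_in W \<pi> v))" by simp
  also have "\<dots> = (\<Sum>w\<in>W. \<Sum>\<pi>\<in>permutations_of_set V. g (rank_in W \<pi> w))"
    by (rule sum.cong[OF refl]) (rule sum_rank_swap[OF v _ W, symmetric])
  also have "\<dots> = (\<Sum>\<pi>\<in>permutations_of_set V. \<Sum>w\<in>W. g (rank_in W \<pi> w))" by (rule sum.swap)
  also have "\<dots> = (\<Sum>\<pi>\<in>permutations_of_set V. \<Sum>j<card W. g j)"
    by (rule sum.cong[OF refl]) (rule sum_ranks[OF finW W])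
  finally show ?thesis by simp
qed

lemma gauss2: "2 * (\<Sum>j\<le>m. j) = m * (m + 1)" for m :: nat
  by (induction m) auto

lemma sum_min:
  fixes d n :: nat
  assumes "d + 1 \<le> n"
  shows "2 * (\<Sum>j\<le>n. min j (d + 1)) + (d + 1) * (d + 2) = 2 * (d + 1) * (n + 1)"
  using assms
proof (induction n rule: nat_induct_at_least)
  case base
  have "(\<Sum>j\<le>d + 1. min j (d + 1)) = (\<Sum>j\<le>d + 1. j)" by (intro sum.cong) auto
  then have "2 * (\<Sum>j\<le>d + 1. min j (d + 1)) = (d + 1) * (d + 2)" using gauss2[of "d + 1"] by simp
  then show ?case by simp
next
  case (Suc n)
  have "(\<Sum>j\<le>Suc n. min j (d + 1)) = (\<Sum>j\<le>n. min j (d + 1)) + (d + 1)" using Suc(1) by simp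
  then show ?case using Suc(2) by simp
qed



lemma choose2: "2 * (Suc n choose 2) = Suc n * n"
  by (induction n) (simp_all add: algebra_simps numeral_2_eq_2)

lemma precedes_irrefl: "distinct \<pi> \<Longrightarrow> \<not> precedes \<pi> x x"
  unfolding precedes_def using nth_eq_iff_index_eq by fastforce

theorem lemma3p9:
  fixes V :: "'a set" and E :: "'a set set" and v :: 'a and d k :: nat
  assumes "graph V E" and "v \<in> V" and "d \<ge> 1"
    and "R_closed d V E"
    and "degree E v = k" and "k \<ge> d + 1"
    and "\<not> contains_clique V E (d + 2)"
  shows "rc_star d V E v \<ge> real (d + 1) - (1 / real (k + 1)) * real ((d + 2) choose 2)"
proof -
  note g = assms(1)
  define M where "M = {u. {u,v} \<in> E}"
  define W where "W = insert v M"
  define P where "P = permutations_of_set V"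
  define gg where "gg j = real (min j (d + 1))" for j
  have finV: "finite V" using g by (simp add: graph_def)
  have MV: "M \<subseteq> V" using graph_edge_V[OF g] by (auto simp: M_def)
  have finM: "finite M" using MV finV finite_subset by blast
  have vM: "v \<notin> M" using graph_no_loop[OF g, of v] by (auto simp: M_def)
  have cardM: "card M = k" using assms(5) by (simp add: Defs.degree_def M_def)
  have WV: "W \<subseteq> V" using MV assms(2) by (auto simp: W_def)
  have cardW: "card W = k + 1" using finM vM cardM by (simp add: W_def)
  have vW: "v \<in> W" by (simp add: W_def)
  have finP: "finite P" unfolding P_def using finV by (simp add: finite_permutations_of_set)
  have cardP: "card P > 0" unfolding P_def using finV by simp
  have rk: "card {u. {u,v} \<in> E \<and> precedes \<pi> u v} = rank_in W \<pi> v" if "\<pi> \<in> P" for \<pi>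
  proof -
    have "distinct \<pi>" using that by (simp add: P_def permutations_of_set_def)
    then have "{u\<in>W. precedes \<pi> u v} = {u. {u,v} \<in> E \<and> precedes \<pi> u v}"
      using precedes_irrefl[of \<pi> v] by (auto simp: W_def M_def)
    then show ?thesis by (simp add: rank_in_def)
  qed
  have bound: "(\<Sum>\<pi>\<in>P. gg (rank_in W \<pi> v)) \<le> (\<Sum>\<pi>\<in>P. real_of_int (rc_star_pi d E v \<pi>))"
  proof (rule sum_mono)
    fix \<pi> assume "\<pi> \<in> P"
    then show "gg (rank_in W \<pi> v) \<le> real_of_int (rc_star_pi d E v \<pi>)"
      using rc_pi_bound[OF g assms(2) assms(4) assms(7), of \<pi>] rk by (simp add: gg_def)
  qed
  have count: "real (k + 1) * (\<Sum>\<pi>\<in>P. gg (rank_in W \<pi> v)) = real (card P) * (\<Sum>j<k + 1. gg j)"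
    using count_ranks[OF finV WV vW, of gg] cardW by (simp add: P_def)
  define S where "S = (\<Sum>j\<le>k. min j (d + 1))"
  have sumg: "(\<Sum>j<k + 1. gg j) = real S"
    unfolding S_def gg_def by (simp add: lessThan_Suc_atMost)
  have SS: "2 * real S + real (d + 1) * real (d + 2) = 2 * real (d + 1) * real (k + 1)"
    using sum_min[OF assms(6)] unfolding S_def
    by (metis (mono_tags) of_nat_add of_nat_mult of_nat_numeral)
  have C: "2 * real ((d + 2) choose 2) = real (d + 2) * real (d + 1)"
    using choose2[of "d + 1"] by (metis Suc_eq_plus1 add_Suc_right nat_1_add_1 of_nat_mult of_nat_numeral)
  have cP: "real (card P) > 0" using cardP by simp
  have "rc_star d V E v = (\<Sum>\<pi>\<in>P. real_of_int (rc_star_pi d E v \<pi>)) / real (card P)"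
    by (simp add: rc_star_def P_def)
  also have "\<dots> \<ge> (\<Sum>\<pi>\<in>P. gg (rank_in W \<pi> v)) / real (card P)"
    using bound cP by (simp add: divide_right_mono)
  finally have r1: "rc_star d V E v \<ge> (\<Sum>\<pi>\<in>P. gg (rank_in W \<pi> v)) / real (card P)" .
  have "(\<Sum>\<pi>\<in>P. gg (rank_in W \<pi> v)) / real (card P) = real S / real (k + 1)"
  proof -
    have cnt2: "real (k + 1) * (\<Sum>\<pi>\<in>P. gg (rank_in W \<pi> v)) = real (card P) * real S"
      using count unfolding sumg .
    have "real (k + 1) > 0" by simp
    then show ?thesis using cnt2 cP by (simp add: frac_eq_eq mult.commute)
  qed
  also have "\<dots> = real (d + 1) - (1 / real (k + 1)) * real ((d + 2) choose 2)"
    using SS C by (simp add: field_simps)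
  finally show ?thesis using r1 by simp
qed


end
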